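(* Let $\mathcal{H}$ be a family of simple graphs with $\rho:=\min\{\chi(H):H\in\mathcal{H}\}\geq 3$. Then \[\mathcal{E}_\mathcal{H}(k)=\Bigl(1+\frac{1}{\rho-2}+o(1)\Bigr)k,\] where $o(1)\to 0$ as $k\to\infty$.
   Context: All graphs are finite, simple and 2-uniform, without isolated vertices. For a graph $G$ and a family of graphs $\mathcal{H}$, $\operatorname{ex}(G,\mathcal{H})$ is the maximum number of edges of a subgraph $F\subseteq G$ that contains no member of $\mathcal{H}$ as a subgraph. For a positive integer $k$, $\mathcal{E}_\mathcal{H}(k):=\sup\{e(G): G \text{ a simple graph with } \operatorname{ex}(G,\mathcal{H})<k\}$. $\chi$ denotes chromatic number. *)

theory Defs
  imports Complex_Main "HOL-Library.Extended_Real"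
begin

text \<open>A finite simple graph, given by its edge set; each edge is a 2-element set of
vertices. The vertex set is the union of the edges (no isolated vertices).\<close>
definition graph :: "nat set set \<Rightarrow> bool" where
  "graph G \<longleftrightarrow> finite G \<and> (\<forall>e\<in>G. card e = 2)"

definition vertices :: "nat set set \<Rightarrow> nat set" where
  "vertices G = \<Union>G"

definition subgraph_of :: "nat set set \<Rightarrow> nat set set \<Rightarrow> bool" where
  "subgraph_of H G \<longleftrightarrow> (\<exists>f. inj_on f (vertices H) \<and> (\<forall>e\<in>H. f ` e \<in> G))"

definition proper_colouring :: "nat set set \<Rightarrow> (nat \<Rightarrow> nat) \<Rightarrow> nat \<Rightarrow> bool" where
  "proper_colouring H c k \<longleftrightarrow> (\<forall>v\<in>vertices H. c v < k) \<and>
      (\<forall>e\<in>H. \<forall>u\<in>e. \<forall>v\<in>e. u \<noteq> v \<longrightarrow> c u \<noteq> c v)"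

definition chromatic_number :: "nat set set \<Rightarrow> nat" where
  "chromatic_number H = (LEAST k. \<exists>c. proper_colouring H c k)"

definition free_of :: "nat set set set \<Rightarrow> nat set set \<Rightarrow> bool" where
  "free_of Hs F \<longleftrightarrow> (\<forall>H\<in>Hs. \<not> subgraph_of H F)"

definition ex :: "nat set set \<Rightarrow> nat set set set \<Rightarrow> nat" where
  "ex G Hs = Max {card F | F. F \<subseteq> G \<and> free_of Hs F}"

definition E_fun :: "nat set set set \<Rightarrow> nat \<Rightarrow> ereal" where
  "E_fun Hs k = Sup {ereal (real (card G)) | G. graph G \<and> ex G Hs < k}"

end

theory Submission
  imports Defs "HOL-Library.FuncSet"
begin

lemma card_filter_sum: "finite A \<Longrightarrow> card {x\<in>A. P x} = (\<Sum>x\<in>A. if P x then 1 else (0::nat))"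
  by (simp add: sum.If_cases Int_def)

lemma double_count:
  assumes "finite W" "finite V"
  shows "(\<Sum>w\<in>W. card {v\<in>V. P w v}) = (\<Sum>v\<in>V. card {w\<in>W. P w v})"
proof -
  have "(\<Sum>w\<in>W. card {v\<in>V. P w v}) = (\<Sum>w\<in>W. \<Sum>v\<in>V. if P w v then 1 else (0::nat))"
    using assms by (simp add: card_filter_sum)
  also have "\<dots> = (\<Sum>v\<in>V. \<Sum>w\<in>W. if P w v then 1 else (0::nat))" by (rule sum.swap)
  also have "\<dots> = (\<Sum>v\<in>V. card {w\<in>W. P w v})"
    using assms by (simp add: card_filter_sum)
  finally show ?thesis .
qed

definition deg :: "nat set set \<Rightarrow> nat set \<Rightarrow> nat \<Rightarrow> nat" where
  "deg F U v = card {u\<in>U. {u,v} \<in> F}"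

definition Kpart :: "nat set set \<Rightarrow> nat \<Rightarrow> nat \<Rightarrow> (nat \<Rightarrow> nat set) \<Rightarrow> bool" where
  "Kpart F s t A \<longleftrightarrow> (\<forall>i<s. finite (A i) \<and> card (A i) = t) \<and>
     (\<forall>i<s. \<forall>j<s. i \<noteq> j \<longrightarrow> A i \<inter> A j = {}) \<and>
     (\<forall>i<s. \<forall>j<s. i \<noteq> j \<longrightarrow> (\<forall>x\<in>A i. \<forall>y\<in>A j. {x,y} \<in> F))"

lemma pigeon:
  assumes "finite X" "finite Y" "\<forall>x\<in>X. f x \<in> Y" "card X > (t-1) * card Y" "t \<ge> 1"
  shows "\<exists>y\<in>Y. card {x\<in>X. f x = y} \<ge> t"
proof (rule ccontr)
  assume "\<not> ?thesis"
  hence lt: "\<forall>y\<in>Y. card {x\<in>X. f x = y} \<le> t - 1" by force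
  have "X = (\<Union>y\<in>Y. {x\<in>X. f x = y})" using assms(3) by blast
  hence "card X \<le> (\<Sum>y\<in>Y. card {x\<in>X. f x = y})" by (metis card_UN_le assms(2))
  also have "\<dots> \<le> (\<Sum>y\<in>Y. t - 1)" by (rule sum_mono) (use lt in auto)
  also have "\<dots> = (t-1) * card Y" by simp
  finally show False using assms(4) by simp
qed


lemma step_arith:
  fixes e n T s t u :: real
  assumes "s \<ge> 1" "t \<ge> 1" "e > 0" "T \<ge> 2*t/e" "n \<ge> 0"
    and "s*T*((1 - 1/s + e)*n) \<le> u*(s*T) + n*((s-1)*T + t)"
  shows "u \<ge> e*n/2"
proof -
  have Tpos: "T > 0" using assms(2,3,4) by (smt (verit) divide_pos_pos)
  have tT: "t \<le> e*T/2" using assms(3,4) by (simp add: field_simps)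
  have "s*T*((1 - 1/s + e)*n) = (s-1)*T*n + e*s*T*n" using assms(1) by (simp add: field_simps)
  hence "u*(s*T) \<ge> e*s*T*n - t*n" using assms(6) by (simp add: algebra_simps)
  moreover have "t*n \<le> e*T/2*n" by (rule mult_right_mono[OF tT assms(5)])
  moreover have "e*T/2*n \<le> e*s*T*n/2" using assms(1,3,5) Tpos by (simp add: mult_right_mono mult_left_mono)
  ultimately have "u*(s*T) \<ge> (e*n/2)*(s*T)" by (simp add: algebra_simps)
  thus ?thesis using Tpos assms(1) by (smt (verit) mult_right_mono zero_less_mult_iff mult_le_cancel_right)
qed

lemma step:
  fixes e :: real
  assumes s: "s \<ge> 1" and t: "t \<ge> 1" and fin: "finite V" and n: "card V = n"
    and md: "\<forall>v\<in>V. real (deg F V v) \<ge> (1 - 1/s + e) * n"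
    and ep: "e > 0"
    and KA: "Kpart F s T A" and AV: "\<forall>i<s. A i \<subseteq> V"
    and T: "real T \<ge> 2*t/e"
    and big: "real n * e / 2 > real (s*T + (t-1) * (T choose t)^s)"
  shows "\<exists>B. Kpart F (Suc s) t B \<and> (\<forall>i<Suc s. B i \<subseteq> V)"
proof -
  have Afin: "\<forall>i<s. finite (A i) \<and> card (A i) = T" using KA unfolding Kpart_def by blast
  have Adisj: "\<forall>i<s. \<forall>j<s. i \<noteq> j \<longrightarrow> A i \<inter> A j = {}" using KA unfolding Kpart_def by blast
  have Aadj: "\<forall>i<s. \<forall>j<s. i \<noteq> j \<longrightarrow> (\<forall>x\<in>A i. \<forall>y\<in>A j. {x,y} \<in> F)" using KA unfolding Kpart_def by blast
  define W where "W = (\<Union>i<s. A i)"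
  have WV: "W \<subseteq> V" using AV unfolding W_def by blast
  have finW: "finite W" using WV fin finite_subset by blast
  have cardW: "card W = s*T"
  proof -
    have "card W = (\<Sum>i<s. card (A i))" unfolding W_def
      by (rule card_UN_disjoint) (use Afin Adisj in auto)
    also have "\<dots> = s*T" using Afin by simp
    finally show ?thesis .
  qed
  define U where "U = {v\<in>V. \<forall>i<s. t \<le> card {w\<in>A i. {w,v} \<in> F}}"
  have UV: "U \<subseteq> V" unfolding U_def by blast
  have finU: "finite U" using UV fin finite_subset by blast
  have bound: "card {w\<in>W. {w,v}\<in>F} \<le> (if v\<in>U then s*T else (s-1)*T + t)" if vV: "v \<in> V" for v
  proof (cases "v \<in> U")
    case True
    have "card {w\<in>W. {w,v}\<in>F} \<le> card W" by (rule card_mono[OF finW]) auto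
    thus ?thesis using True cardW by simp
  next
    case False
    then obtain i0 where i0: "i0 < s" "card {w\<in>A i0. {w,v} \<in> F} < t" using vV unfolding U_def by force
    have sub: "{w\<in>W. {w,v}\<in>F} \<subseteq> (\<Union>i\<in>{..<s}-{i0}. A i) \<union> {w\<in>A i0. {w,v} \<in> F}"
      unfolding W_def by blast
    have c1: "card (\<Union>i\<in>{..<s}-{i0}. A i) \<le> (s-1)*T"
    proof -
      have "card (\<Union>i\<in>{..<s}-{i0}. A i) \<le> (\<Sum>i\<in>{..<s}-{i0}. card (A i))" by (rule card_UN_le) simp
      also have "\<dots> = (\<Sum>i\<in>{..<s}-{i0}. T)" using Afin by (intro sum.cong) auto
      also have "\<dots> = (s-1)*T" using i0 by simp
      finally show ?thesis .
    qed
    have "card {w\<in>W. {w,v}\<in>F} \<le> card ((\<Union>i\<in>{..<s}-{i0}. A i) \<union> {w\<in>A i0. {w,v} \<in> F})"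
      by (rule card_mono[OF _ sub]) (use Afin i0 in auto)
    also have "\<dots> \<le> card (\<Union>i\<in>{..<s}-{i0}. A i) + card {w\<in>A i0. {w,v} \<in> F}" by (rule card_Un_le)
    finally show ?thesis using False c1 i0 by simp
  qed
  have sum1: "(\<Sum>w\<in>W. deg F V w) = (\<Sum>v\<in>V. card {w\<in>W. {w,v}\<in>F})"
  proof -
    have "(\<Sum>w\<in>W. deg F V w) = (\<Sum>w\<in>W. card {v\<in>V. {v,w}\<in>F})" unfolding deg_def by simp
    also have "\<dots> = (\<Sum>v\<in>V. card {w\<in>W. {v,w}\<in>F})" by (rule double_count[OF finW fin])
    also have "\<dots> = (\<Sum>v\<in>V. card {w\<in>W. {w,v}\<in>F})" by (simp add: insert_commute)
    finally show ?thesis .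
  qed
  have lower: "real (s*T) * ((1 - 1/s + e) * n) \<le> real (\<Sum>w\<in>W. deg F V w)"
  proof -
    have "real (s*T) * ((1 - 1/s + e) * n) = (\<Sum>w\<in>W. (1 - 1/s + e) * n)" using cardW by simp
    also have "\<dots> \<le> (\<Sum>w\<in>W. real (deg F V w))" by (rule sum_mono) (use md WV in auto)
    finally show ?thesis by simp
  qed
  have upper: "(\<Sum>v\<in>V. card {w\<in>W. {w,v}\<in>F}) \<le> card U * (s*T) + n * ((s-1)*T + t)"
  proof -
    have eq: "(\<Sum>v\<in>V. (if v\<in>U then s*T else 0)) = card U * (s*T)"
      using fin UV by (simp add: sum.If_cases Int_absorb1)
    have "(\<Sum>v\<in>V. card {w\<in>W. {w,v}\<in>F}) \<le> (\<Sum>v\<in>V. (if v\<in>U then s*T else 0) + ((s-1)*T + t))"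
      by (rule sum_mono) (use bound in fastforce)
    also have "\<dots> = (\<Sum>v\<in>V. (if v\<in>U then s*T else 0)) + n * ((s-1)*T + t)"
      by (simp add: sum.distrib n)
    also have "\<dots> = card U * (s*T) + n * ((s-1)*T + t)" by (simp only: eq)
    finally show ?thesis .
  qed
  have Ubig: "real (card U) \<ge> e * n / 2"
  proof (rule step_arith[of "real s" "real t" e "real T" "real n"])
    show "real s \<ge> 1" "real t \<ge> 1" using s t by auto
    show "e > 0" "real T \<ge> 2 * real t / e" "real n \<ge> 0" using ep T by auto
    have "real (s*T) * ((1 - 1/s + e) * n) \<le> real (card U * (s*T) + n * ((s-1)*T + t))"
      using lower sum1 upper by (metis of_nat_le_iff order_trans)
    thus "real s * real T * ((1 - 1 / real s + e) * real n)
      \<le> real (card U) * (real s * real T) + real n * ((real s - 1) * real T + real t)"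
      using s by (simp add: of_nat_diff)
  qed
  define K where "K = (T choose t)^s"
  define X where "X = U - W"
  have finX: "finite X" using finU X_def by simp
  have cardX: "card X > (t-1) * K"
  proof -
    have "card U - card W \<le> card X" unfolding X_def by (rule diff_card_le_card_Diff[OF finW])
    moreover have "real (card U) > real (s*T + (t-1)*K)"
    proof -
      have "e * real n / 2 = real n * e / 2" by simp
      thus ?thesis using Ubig big unfolding K_def by linarith
    qed
    ultimately show ?thesis using cardW by linarith
  qed
  define Y where "Y = PiE {..<s} (\<lambda>i. {S. S \<subseteq> A i \<and> card S = t})"
  have finY: "finite Y" unfolding Y_def using Afin by (intro finite_PiE) auto
  have cardY: "card Y = K"
  proof -
    have "card Y = (\<Prod>i<s. card {S. S \<subseteq> A i \<and> card S = t})" unfolding Y_def by (rule card_PiE) simp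
    also have "\<dots> = (\<Prod>i<s. T choose t)" using Afin by (intro prod.cong) (auto simp: n_subsets)
    finally show ?thesis unfolding K_def by simp
  qed
  define \<phi> where "\<phi> u = restrict (\<lambda>i. SOME S. S \<subseteq> {w\<in>A i. {w,u}\<in>F} \<and> card S = t) {..<s}" for u
  have phiS: "\<phi> u i \<subseteq> {w\<in>A i. {w,u}\<in>F} \<and> card (\<phi> u i) = t" if "u \<in> X" "i < s" for u i
  proof -
    have "t \<le> card {w\<in>A i. {w,u}\<in>F}" using that unfolding X_def U_def by blast
    then obtain S where "S \<subseteq> {w\<in>A i. {w,u}\<in>F}" "card S = t" by (rule obtain_subset_with_card_n)
    hence "\<exists>S. S \<subseteq> {w\<in>A i. {w,u}\<in>F} \<and> card S = t" by blast
    hence "(SOME S. S \<subseteq> {w\<in>A i. {w,u}\<in>F} \<and> card S = t) \<subseteq> {w\<in>A i. {w,u}\<in>F} \<and>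
       card (SOME S. S \<subseteq> {w\<in>A i. {w,u}\<in>F} \<and> card S = t) = t" by (rule someI_ex)
    thus ?thesis unfolding \<phi>_def using that(2) by simp
  qed
  have phiY: "\<forall>u\<in>X. \<phi> u \<in> Y" unfolding Y_def
  proof
    fix u assume "u \<in> X"
    thus "\<phi> u \<in> PiE {..<s} (\<lambda>i. {S. S \<subseteq> A i \<and> card S = t})"
    proof (unfold PiE_iff, intro conjI)
      show "\<forall>i\<in>{..<s}. \<phi> u i \<in> {S. S \<subseteq> A i \<and> card S = t}" using phiS[OF \<open>u \<in> X\<close>] by auto
      show "\<phi> u \<in> extensional {..<s}" unfolding \<phi>_def by simp
    qed
  qed
  obtain g where gY: "g \<in> Y" and gbig: "card {x\<in>X. \<phi> x = g} \<ge> t"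
  proof -
    have "(t-1) * card Y < card X" using cardX cardY by simp
    from pigeon[OF finX finY phiY this t] show ?thesis using that by blast
  qed
  obtain B0 where B0: "B0 \<subseteq> {x\<in>X. \<phi> x = g}" "card B0 = t" "finite B0"
    using gbig by (rule obtain_subset_with_card_n)
  define B where "B i = (if i < s then g i else B0)" for i
  have gi: "g i \<subseteq> A i \<and> card (g i) = t" if "i < s" for i using gY that unfolding Y_def by auto
  have B0adj: "\<forall>x\<in>g i. \<forall>y\<in>B0. {x,y} \<in> F" if "i < s" for i
  proof (intro ballI)
    fix x y assume x: "x \<in> g i" and y: "y \<in> B0"
    have "y \<in> X" "\<phi> y = g" using y B0 by auto
    hence "g i \<subseteq> {w\<in>A i. {w,y}\<in>F}" using phiS[of y i] that by simp
    thus "{x,y} \<in> F" using x by blast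
  qed
  have "Kpart F (Suc s) t B"
    unfolding Kpart_def
  proof (intro conjI allI impI)
    fix i assume "i < Suc s"
    show "finite (B i)"
    proof (cases "i < s")
      case True thus ?thesis using gi Afin finite_subset unfolding B_def by metis
    qed (use B0 B_def in simp)
    show "card (B i) = t" using gi B0 unfolding B_def by simp
  next
    fix i j assume ij: "i < Suc s" "j < Suc s" "i \<noteq> j"
    have X0: "B0 \<inter> A k = {}" if "k < s" for k using B0 that unfolding X_def W_def by blast
    show "B i \<inter> B j = {}"
    proof (cases "i < s")
      case True note iT = True
      show ?thesis
      proof (cases "j < s")
        case True
        have "g i \<subseteq> A i" "g j \<subseteq> A j" using gi iT True by auto
        moreover have "A i \<inter> A j = {}" using Adisj iT True ij by blast
        ultimately show ?thesis using iT True unfolding B_def by auto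
      next
        case False
        have "g i \<subseteq> A i" using gi iT by auto
        thus ?thesis using X0[OF iT] iT False unfolding B_def by auto
      qed
    next
      case False
      hence js: "j < s" using ij by simp
      have "g j \<subseteq> A j" using gi js by auto
      thus ?thesis using X0[OF js] js False unfolding B_def by auto
    qed
  next
    fix i j assume ij: "i < Suc s" "j < Suc s" "i \<noteq> j"
    show "\<forall>x\<in>B i. \<forall>y\<in>B j. {x, y} \<in> F"
    proof (cases "i < s")
      case True note iT = True
      show ?thesis
      proof (cases "j < s")
        case True
        have "g i \<subseteq> A i" "g j \<subseteq> A j" using gi iT True by auto
        thus ?thesis using iT True ij Aadj unfolding B_def by (simp add: subset_iff)
      next
        case False thus ?thesis using iT B0adj unfolding B_def by simp
      qed
    next
      case False
      hence js: "j < s" using ij by simp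
      have "\<forall>x\<in>g j. \<forall>y\<in>B0. {x,y} \<in> F" using B0adj[OF js] .
      hence "\<forall>x\<in>B0. \<forall>y\<in>g j. {x,y} \<in> F" by (metis insert_commute)
      thus ?thesis using False js unfolding B_def by simp
    qed
  qed
  moreover have "\<forall>i<Suc s. B i \<subseteq> V"
  proof (intro allI impI)
    fix i assume "i < Suc s"
    show "B i \<subseteq> V"
    proof (cases "i < s")
      case True thus ?thesis using gi AV unfolding B_def by force
    next
      case False
      have "B0 \<subseteq> V" using B0 UV unfolding X_def by auto
      thus ?thesis using False unfolding B_def by simp
    qed
  qed
  ultimately show ?thesis by blast
qed

lemma big_N: fixes e C :: real assumes "e > 0" obtains N :: nat where "\<forall>n\<ge>N. real n * e / 2 > C"
proof -
  obtain N :: nat where N: "real N > 2*C/e" using reals_Archimedean2 by blast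
  have "\<forall>n\<ge>N. real n * e / 2 > C"
  proof (intro allI impI)
    fix n assume "n \<ge> N"
    hence "real n > 2*C/e" using N by (meson of_nat_le_iff less_le_trans)
    thus "real n * e / 2 > C" using assms by (simp add: field_simps)
  qed
  thus ?thesis using that by blast
qed

lemma T_choice: fixes e :: real and t :: nat assumes "e > 0" "t \<ge> 1"
  shows "real (nat \<lceil>2 * real t / e\<rceil>) \<ge> 2 * real t / e" "nat \<lceil>2 * real t / e\<rceil> \<ge> 1"
proof -
  show "real (nat \<lceil>2 * real t / e\<rceil>) \<ge> 2 * real t / e" by linarith
  have "2 * real t / e > 0" using assms by simp
  thus "nat \<lceil>2 * real t / e\<rceil> \<ge> 1" by linarith
qed

lemma mindeg:
  assumes "s \<ge> 1"
  shows "\<forall>e>0. \<forall>t\<ge>1. \<exists>N. \<forall>F V. finite V \<longrightarrow> card V \<ge> N \<longrightarrow>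
     (\<forall>v\<in>V. real (deg F V v) \<ge> (1 - 1/s + e) * card V) \<longrightarrow>
     (\<exists>B. Kpart F (Suc s) t B \<and> (\<forall>i<Suc s. B i \<subseteq> V))"
  using assms
proof (induction s rule: nat_induct_at_least)
  case base
  show ?case
  proof (intro allI impI)
    fix e :: real and t :: nat assume e: "e > 0" and t: "t \<ge> 1"
    define T where "T = nat \<lceil>2 * real t / e\<rceil>"
    have T1: "real T \<ge> 2 * real t / e" using T_choice[OF e t] T_def by simp
    obtain N0 where N0: "\<forall>n\<ge>N0. real n * e / 2 > real (1*T + (t-1)*(T choose t)^1)"
      using big_N[OF e] by blast
    show "\<exists>N. \<forall>F V. finite V \<longrightarrow> card V \<ge> N \<longrightarrow>
     (\<forall>v\<in>V. real (deg F V v) \<ge> (1 - 1/real (1::nat) + e) * card V) \<longrightarrow>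
     (\<exists>B. Kpart F (Suc 1) t B \<and> (\<forall>i<Suc 1. B i \<subseteq> V))"
    proof (intro exI[of _ "max N0 T"] allI impI)
      fix F V assume fin: "finite V" and cV: "max N0 T \<le> card V"
        and md: "\<forall>v\<in>V. real (deg F V v) \<ge> (1 - 1/real (1::nat) + e) * card V"
      obtain A0 where A0: "A0 \<subseteq> V" "card A0 = T" "finite A0"
        using cV by (metis max.bounded_iff obtain_subset_with_card_n)
      have KA: "Kpart F 1 T (\<lambda>_. A0)" unfolding Kpart_def using A0 by auto
      show "\<exists>B. Kpart F (Suc 1) t B \<and> (\<forall>i<Suc 1. B i \<subseteq> V)"
        by (rule step[OF _ t fin refl md e KA _ T1]) (use A0 N0 cV in auto)
    qed
  qed
next
  case (Suc s)
  show ?case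
  proof (intro allI impI)
    fix e :: real and t :: nat assume e: "e > 0" and t: "t \<ge> 1"
    define T where "T = nat \<lceil>2 * real t / e\<rceil>"
    have T1: "real T \<ge> 2 * real t / e" "T \<ge> 1" using T_choice[OF e t] T_def by simp_all
    obtain N1 where N1: "\<forall>F V. finite V \<longrightarrow> card V \<ge> N1 \<longrightarrow>
     (\<forall>v\<in>V. real (deg F V v) \<ge> (1 - 1/s + e) * card V) \<longrightarrow>
     (\<exists>B. Kpart F (Suc s) T B \<and> (\<forall>i<Suc s. B i \<subseteq> V))"
      using Suc.IH e T1(2) by blast
    obtain N0 where N0: "\<forall>n\<ge>N0. real n * e / 2 > real (Suc s*T + (t-1)*(T choose t)^(Suc s))"
      using big_N[OF e] by blast
    show "\<exists>N. \<forall>F V. finite V \<longrightarrow> card V \<ge> N \<longrightarrow>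
     (\<forall>v\<in>V. real (deg F V v) \<ge> (1 - 1/real (Suc s) + e) * card V) \<longrightarrow>
     (\<exists>B. Kpart F (Suc (Suc s)) t B \<and> (\<forall>i<Suc (Suc s). B i \<subseteq> V))"
    proof (intro exI[of _ "max N0 N1"] allI impI)
      fix F V assume fin: "finite V" and cV: "max N0 N1 \<le> card V"
        and md: "\<forall>v\<in>V. real (deg F V v) \<ge> (1 - 1/real (Suc s) + e) * card V"
      have "1/real (Suc s) \<le> 1/real s" using Suc.hyps by (simp add: frac_le)
      hence "(1 - 1/real s + e) * card V \<le> (1 - 1/real (Suc s) + e) * card V"
        by (intro mult_right_mono) auto
      hence md': "\<forall>v\<in>V. real (deg F V v) \<ge> (1 - 1/real s + e) * card V" using md by force
      obtain B where B: "Kpart F (Suc s) T B" "\<forall>i<Suc s. B i \<subseteq> V"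
        using N1 fin cV md' by (metis max.bounded_iff)
      show "\<exists>B. Kpart F (Suc (Suc s)) t B \<and> (\<forall>i<Suc (Suc s). B i \<subseteq> V)"
        by (rule step[OF _ t fin refl md e B(1) B(2) T1(1)]) (use N0 cV in auto)
    qed
  qed
qed

lemma ecount_split:
  assumes fin: "finite U" and F2: "\<forall>e\<in>F. card e = 2" and v: "v \<in> U"
  shows "card {e\<in>F. e \<subseteq> U} \<le> card {e\<in>F. e \<subseteq> U - {v}} + deg F U v"
proof -
  have sub: "{e\<in>F. e \<subseteq> U} \<subseteq> {e\<in>F. e \<subseteq> U - {v}} \<union> (\<lambda>u. {u,v}) ` {u\<in>U. {u,v}\<in>F}"
  proof
    fix e assume e: "e \<in> {e\<in>F. e \<subseteq> U}"
    hence eF: "e \<in> F" and eU: "e \<subseteq> U" by auto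
    show "e \<in> {e\<in>F. e \<subseteq> U - {v}} \<union> (\<lambda>u. {u,v}) ` {u\<in>U. {u,v}\<in>F}"
    proof (cases "v \<in> e")
      case False
      hence "e \<subseteq> U - {v}" using eU by blast
      thus ?thesis using eF by blast
    next
      case True
      have "card e = 2" using F2 eF by blast
      then obtain x y where xy: "e = {x,y}" "x \<noteq> y" by (auto simp: card_2_iff)
      obtain u where u: "e = {u,v}"
      proof (cases "v = x")
        case True
        hence "e = {y,v}" using xy by auto
        thus ?thesis using that by blast
      next
        case False
        hence "v = y" using \<open>v \<in> e\<close> xy by auto
        hence "e = {x,v}" using xy by auto
        thus ?thesis using that by blast
      qed
      have "u \<in> U" using u eU by auto
      hence "u \<in> {u\<in>U. {u,v}\<in>F}" using u eF by simp
      hence "e \<in> (\<lambda>u. {u,v}) ` {u\<in>U. {u,v}\<in>F}" using u by (intro image_eqI[of _ _ u]) auto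
      thus ?thesis by (rule UnI2)
    qed
  qed
  have "{e\<in>F. e \<subseteq> U - {v}} \<subseteq> Pow (U - {v})" by blast
  hence f1: "finite {e\<in>F. e \<subseteq> U - {v}}" using fin by (meson finite_Diff finite_Pow_iff finite_subset)
  have f2: "finite ((\<lambda>u. {u,v}) ` {u\<in>U. {u,v}\<in>F})" using fin by simp
  have c3: "card ((\<lambda>u. {u,v}) ` {u\<in>U. {u,v}\<in>F}) \<le> deg F U v" unfolding deg_def by (rule card_image_le) (use fin in simp)
  have "card {e\<in>F. e \<subseteq> U} \<le> card ({e\<in>F. e \<subseteq> U - {v}} \<union> (\<lambda>u. {u,v}) ` {u\<in>U. {u,v}\<in>F})"
    by (rule card_mono[OF _ sub]) (rule finite_UnI[OF f1 f2])
  also have "\<dots> \<le> card {e\<in>F. e \<subseteq> U - {v}} + card ((\<lambda>u. {u,v}) ` {u\<in>U. {u,v}\<in>F})" by (rule card_Un_le)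
  also have "\<dots> \<le> card {e\<in>F. e \<subseteq> U - {v}} + deg F U v"
    using c3 by simp
  finally show ?thesis .
qed

lemma delete:
  fixes c D :: real
  assumes "finite U" "\<forall>e\<in>F. card e = 2" "real (card {e\<in>F. e \<subseteq> U}) > c * card U * (card U + 1)/2 + D"
  shows "\<exists>U'\<subseteq>U. (\<forall>v\<in>U'. real (deg F U' v) \<ge> c * card U') \<and>
           real (card {e\<in>F. e\<subseteq>U'}) > c * card U' * (card U' + 1)/2 + D"
  using assms
proof (induction "card U" arbitrary: U rule: less_induct)
  case less
  show ?case
  proof (cases "\<forall>v\<in>U. real (deg F U v) \<ge> c * card U")
    case True thus ?thesis using less.prems by blast
  next
    case False
    then obtain v where v: "v \<in> U" "real (deg F U v) < c * card U" by force
    define m where "m = card U"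
    have m1: "m \<ge> 1" using v less.prems(1) m_def by (metis One_nat_def Suc_leI card_gt_0_iff empty_iff)
    have cU1: "card (U - {v}) = m - 1" using v less.prems(1) m_def by simp
    have split: "card {e\<in>F. e \<subseteq> U} \<le> card {e\<in>F. e \<subseteq> U - {v}} + deg F U v"
      by (rule ecount_split[OF less.prems(1,2) v(1)])
    have ineq: "real (card {e\<in>F. e \<subseteq> U - {v}}) > c * card (U - {v}) * (card (U - {v}) + 1)/2 + D"
    proof -
      have r: "real (card (U - {v})) = real m - 1" using cU1 m1 by (simp add: of_nat_diff)
      have "c * (real m - 1) * (real m - 1 + 1)/2 + D = c * m * (m + 1)/2 + D - c * m"
        by (simp add: field_simps)
      also have "\<dots> < real (card {e\<in>F. e \<subseteq> U}) - real (deg F U v)"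
        using less.prems(3) v(2) m_def by simp
      also have "\<dots> \<le> real (card {e\<in>F. e \<subseteq> U - {v}})" using split by linarith
      finally show ?thesis using r by simp
    qed
    have lt: "card (U - {v}) < card U" using v less.prems(1) by (meson card_Diff1_less)
    have fin': "finite (U - {v})" using less.prems(1) by simp
    have "\<exists>U'\<subseteq>U - {v}. (\<forall>w\<in>U'. real (deg F U' w) \<ge> c * card U') \<and>
           real (card {e\<in>F. e\<subseteq>U'}) > c * card U' * (card U' + 1)/2 + D"
      by (rule less.hyps[OF lt fin' less.prems(2) ineq])
    thus ?thesis by blast
  qed
qed

lemma choose2_real: "real (n choose 2) = real n * (real n - 1) / 2"
proof -
  have "even (n * (n - 1))" by auto
  hence "real (n * (n - 1) div 2) = real (n * (n-1)) / 2" by (simp add: real_of_nat_div)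
  thus ?thesis by (cases n) (simp_all add: choose_two algebra_simps)
qed

lemma ecount_le: "finite U \<Longrightarrow> \<forall>e\<in>F. card e = 2 \<Longrightarrow> real (card {e\<in>F. e \<subseteq> U}) \<le> real (card U) ^ 2 / 2"
proof -
  assume fin: "finite U" and F2: "\<forall>e\<in>F. card e = 2"
  have "card {e\<in>F. e \<subseteq> U} \<le> card {e. e \<subseteq> U \<and> card e = 2}"
    by (rule card_mono) (use fin F2 in auto)
  also have "\<dots> = card U choose 2" by (rule n_subsets[OF fin])
  finally have "real (card {e\<in>F. e \<subseteq> U}) \<le> real (card U) * (real (card U) - 1) / 2"
    using choose2_real by (metis of_nat_le_iff)
  also have "\<dots> \<le> real (card U) ^ 2 / 2" by (simp add: power2_eq_square algebra_simps)
  finally show ?thesis .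
qed

lemma ES_arith:
  fixes c' d n :: real
  assumes "0 \<le> c'" "c' \<le> 1" "d > 0" "n > 16/(3*d) + 4"
  shows "(c' + d) * (n * (n - 1) / 2) > (c' + d/2) * n * (n + 1)/2 + d * n^2/16"
proof -
  have n0: "n > 0" using assms(3,4) by (smt (verit) divide_pos_pos)
  have "3*d*n/16 > 1 + 3*d/4"
  proof -
    have "n * (3*d) > (16/(3*d) + 4) * (3*d)" using assms(3,4) by (simp add: mult_strict_right_mono)
    also have "(16/(3*d) + 4) * (3*d) = 16 + 12*d" using assms(3) by (simp add: field_simps)
    finally show ?thesis by (simp add: algebra_simps)
  qed
  hence "n * (3*d*n/16 - c' - 3*d/4) > 0" using n0 assms(2) by (intro mult_pos_pos) auto
  moreover have "(c' + d) * (n * (n - 1) / 2) - ((c' + d/2) * n * (n + 1)/2 + d * n^2/16)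
     = n * (3*d*n/16 - c' - 3*d/4)" by (simp add: field_simps power2_eq_square)
  ultimately show ?thesis by linarith
qed

lemma ES:
  fixes d :: real
  assumes r: "r \<ge> 1" and d: "d > 0" and t: "t \<ge> 1"
  shows "\<exists>N. \<forall>n\<ge>N. \<forall>F. (\<forall>e\<in>F. card e = 2 \<and> e \<subseteq> {..<n}) \<longrightarrow>
     real (card F) \<ge> ((real r - 1)/r + d) * (n choose 2) \<longrightarrow> (\<exists>B. Kpart F (Suc r) t B)"
proof -
  have d2: "d/2 > 0" using d by simp
  obtain N0 where N0: "\<forall>F V. finite V \<longrightarrow> card V \<ge> N0 \<longrightarrow>
     (\<forall>v\<in>V. real (deg F V v) \<ge> (1 - 1/r + d/2) * card V) \<longrightarrow>
     (\<exists>B. Kpart F (Suc r) t B \<and> (\<forall>i<Suc r. B i \<subseteq> V))"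
    using mindeg[OF r] d2 t by blast
  obtain N1 :: nat where N1: "real N1 > 16/(3*d) + 4" using reals_Archimedean2 by blast
  obtain N2 :: nat where N2: "real N2 > 8 * real N0 ^ 2 / d" using reals_Archimedean2 by blast
  show ?thesis
  proof (intro exI[of _ "max N1 N2"] allI impI)
    fix n F assume n: "max N1 N2 \<le> n" and F: "\<forall>e\<in>F. card e = 2 \<and> e \<subseteq> {..<n}"
      and cF: "real (card F) \<ge> ((real r - 1)/r + d) * (n choose 2)"
    define c where "c = 1 - 1/real r + d/2"
    define D where "D = d * real n ^ 2 / 16"
    have F2: "\<forall>e\<in>F. card e = 2" using F by blast
    have FV: "{e\<in>F. e \<subseteq> {..<n}} = F" using F by blast
    have "1/real r \<le> 1" "0 \<le> 1/real r" using r by simp_all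
    hence c'0: "0 \<le> 1 - 1/real r" "1 - 1/real r \<le> 1" by linarith+
    have "real N1 \<le> real n" "real N2 \<le> real n" using n by simp_all
    hence nN1: "real n > 16/(3*d) + 4" using N1 by linarith
    have eq1: "(real r - 1)/r = 1 - 1/real r" using r by (simp add: field_simps)
    have "real (card {e\<in>F. e \<subseteq> {..<n}}) > c * card {..<n} * (card {..<n} + 1)/2 + D"
    proof -
      have "c * card {..<n} * (card {..<n} + 1)/2 + D = (1 - 1/real r + d/2) * real n * (real n + 1)/2 + d * real n ^ 2/16"
        unfolding c_def D_def by simp
      also have "\<dots> < (1 - 1/real r + d) * (real n * (real n - 1) / 2)"
        by (rule ES_arith[OF c'0 d nN1])
      also have "\<dots> \<le> real (card F)" using cF eq1 choose2_real[of n] by simp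
      finally show ?thesis using FV by simp
    qed
    from delete[OF finite_lessThan F2 this] obtain U where U: "U \<subseteq> {..<n}" "\<forall>v\<in>U. real (deg F U v) \<ge> c * card U"
      "real (card {e\<in>F. e\<subseteq>U}) > c * card U * (card U + 1)/2 + D"
      by blast
    have finU: "finite U" using U(1) finite_subset by blast
    have c0: "c \<ge> 0" using c'0 d unfolding c_def by simp
    have "real (card U) ^ 2 / 2 > D"
    proof -
      have "c * card U * (card U + 1)/2 \<ge> 0" using c0 by simp
      thus ?thesis using U(3) ecount_le[OF finU F2] by linarith
    qed
    hence m2: "real (card U) ^ 2 > d * real n ^ 2 / 8" unfolding D_def by simp
    have nN2: "real n > 8 * real N0 ^ 2 / d" using N2 \<open>real N2 \<le> real n\<close> by linarith
    have "8 * real N0 ^ 2 / d \<ge> 0" using d by simp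
    hence "real n > 0" using nN2 by linarith
    hence n1: "real n \<ge> 1" by simp
    have "d * real n ^ 2 / 8 \<ge> real N0 ^ 2"
    proof -
      have "real N0 ^ 2 \<le> d * real n / 8" using nN2 d by (simp add: field_simps)
      also have "\<dots> \<le> d * real n / 8 * real n"
      proof -
        have "0 \<le> d * real n / 8" using d by simp
        thus ?thesis using n1 by (metis mult.right_neutral mult_left_mono)
      qed
      finally show ?thesis by (simp add: power2_eq_square algebra_simps)
    qed
    hence "real (card U) ^ 2 > real N0 ^ 2" using m2 by linarith
    hence "real N0 < real (card U)" by (rule power_less_imp_less_base) simp
    hence cU: "card U \<ge> N0" by simp
    have md: "\<forall>v\<in>U. real (deg F U v) \<ge> (1 - 1/r + d/2) * card U" using U(2) unfolding c_def by simp
    have "\<exists>B. Kpart F (Suc r) t B \<and> (\<forall>i<Suc r. B i \<subseteq> U)" using N0 finU cU md by simp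
    thus "\<exists>B. Kpart F (Suc r) t B" by blast
  qed
qed

lemma graph_vfin: "graph H \<Longrightarrow> finite (vertices H)"
  unfolding graph_def vertices_def
proof (elim conjE, intro finite_Union)
  fix M assume "\<forall>e\<in>H. card e = 2" "M \<in> H"
  hence "card M = 2" by blast
  thus "finite M" by (intro card_ge_0_finite) simp
qed

lemma colour_exists:
  assumes "graph H" shows "\<exists>c. proper_colouring H c (chromatic_number H)"
proof -
  obtain k where k: "vertices H \<subseteq> {..<k}" using finite_nat_bounded[OF graph_vfin[OF assms]] by blast
  have "proper_colouring H id k" unfolding proper_colouring_def using k by (simp add: subset_iff)
  hence "\<exists>c. proper_colouring H c k" by blast
  thus ?thesis unfolding chromatic_number_def by (rule LeastI[where P="\<lambda>k. \<exists>c. proper_colouring H c k"])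
qed

lemma edge2: assumes "card e = 2" obtains x y where "e = {x,y}" "x \<noteq> y"
  using assms by (auto simp: card_2_iff)

lemma embed:
  assumes gH: "graph H" and pc: "proper_colouring H c (Suc r)" and KB: "Kpart F (Suc r) t B"
    and tH: "card (vertices H) \<le> t"
  shows "subgraph_of H F"
proof -
  define C where "C i = {v\<in>vertices H. c v = i}" for i
  have vfin: "finite (vertices H)" by (rule graph_vfin[OF gH])
  have Bfin: "finite (B i)" "card (B i) = t" if "i < Suc r" for i using KB that unfolding Kpart_def by blast+
  have Cfin: "finite (C i)" for i unfolding C_def using vfin by simp
  have "\<forall>i. \<exists>g. i < Suc r \<longrightarrow> g ` C i \<subseteq> B i \<and> inj_on g (C i)"
  proof
    fix i
    show "\<exists>g. i < Suc r \<longrightarrow> g ` C i \<subseteq> B i \<and> inj_on g (C i)"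
    proof (cases "i < Suc r")
      case True
      have "card (C i) \<le> card (vertices H)" unfolding C_def by (rule card_mono[OF vfin]) auto
      also have "\<dots> \<le> card (B i)" using tH Bfin[OF True] by simp
      finally have "\<exists>g. g ` C i \<subseteq> B i \<and> inj_on g (C i)"
        by (rule card_le_inj[OF Cfin Bfin(1)[OF True]])
      thus ?thesis by blast
    qed simp
  qed
  from choice[OF this] obtain g where g: "\<forall>i. i < Suc r \<longrightarrow> g i ` C i \<subseteq> B i \<and> inj_on (g i) (C i)"
    by blast
  have disj: "\<forall>i<Suc r. \<forall>j<Suc r. i \<noteq> j \<longrightarrow> B i \<inter> B j = {}" using KB unfolding Kpart_def by blast
  have adj: "\<forall>i<Suc r. \<forall>j<Suc r. i \<noteq> j \<longrightarrow> (\<forall>x\<in>B i. \<forall>y\<in>B j. {x,y} \<in> F)" using KB unfolding Kpart_def by blast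
  define f where "f v = g (c v) v" for v
  have cv: "\<forall>v\<in>vertices H. c v < Suc r" using pc unfolding proper_colouring_def by blast
  have fB: "f v \<in> B (c v)" if "v \<in> vertices H" for v
  proof -
    have "v \<in> C (c v)" unfolding C_def using that by simp
    moreover have "g (c v) ` C (c v) \<subseteq> B (c v)" using g cv that by simp
    ultimately show ?thesis unfolding f_def by blast
  qed
  have "inj_on f (vertices H)"
  proof (rule inj_onI)
    fix u v assume u: "u \<in> vertices H" and v: "v \<in> vertices H" and eq: "f u = f v"
    show "u = v"
    proof (cases "c u = c v")
      case True
      have "u \<in> C (c u)" "v \<in> C (c u)" unfolding C_def using u v True by auto
      moreover have "inj_on (g (c u)) (C (c u))" using g cv u by simp
      ultimately show ?thesis using eq True unfolding f_def by (metis inj_onD)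
    next
      case False
      have "B (c u) \<inter> B (c v) = {}" using disj[rule_format, of "c u" "c v"] cv u v False by simp
      thus ?thesis using fB[OF u] fB[OF v] eq by auto
    qed
  qed
  moreover have "\<forall>e\<in>H. f ` e \<in> F"
  proof
    fix e assume e: "e \<in> H"
    have "card e = 2" using gH e unfolding graph_def by blast
    then obtain x y where xy: "e = {x,y}" "x \<noteq> y" by (rule edge2)
    have xv: "x \<in> vertices H" "y \<in> vertices H" using e xy unfolding vertices_def by auto
    have "c x \<noteq> c y" using pc e xy unfolding proper_colouring_def by blast
    moreover have "c x < Suc r" "c y < Suc r" using cv xv by auto
    moreover have "f x \<in> B (c x)" "f y \<in> B (c y)" using fB xv by auto
    ultimately have "{f x, f y} \<in> F" using adj[rule_format, of "c x" "c y" "f x" "f y"] by simp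
    thus "f ` e \<in> F" using xy by simp
  qed
  ultimately show ?thesis unfolding subgraph_of_def by blast
qed

lemma colourable_free:
  assumes pc: "proper_colouring F c r" and Hs: "\<forall>H\<in>Hs. r < chromatic_number H"
  shows "free_of Hs F"
  unfolding free_of_def
proof (intro ballI notI)
  fix H assume H: "H \<in> Hs" and "subgraph_of H F"
  then obtain f where f: "inj_on f (vertices H)" "\<forall>e\<in>H. f ` e \<in> F" unfolding subgraph_of_def by blast
  have "proper_colouring H (c \<circ> f) r"
    unfolding proper_colouring_def
  proof (intro conjI ballI impI)
    fix v assume "v \<in> vertices H"
    then obtain e where e: "e \<in> H" "v \<in> e" unfolding vertices_def by blast
    hence "f v \<in> vertices F" using f(2) unfolding vertices_def by blast
    thus "(c \<circ> f) v < r" using pc unfolding proper_colouring_def by simp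
  next
    fix e u v assume e: "e \<in> H" and u: "u \<in> e" and v: "v \<in> e" and uv: "u \<noteq> v"
    have "u \<in> vertices H" "v \<in> vertices H" using e u v unfolding vertices_def by auto
    hence "f u \<noteq> f v" using f(1) uv by (meson inj_onD)
    moreover have "f u \<in> f ` e" "f v \<in> f ` e" using u v by auto
    ultimately show "(c \<circ> f) u \<noteq> (c \<circ> f) v" using pc f(2) e unfolding proper_colouring_def by auto
  qed
  hence "chromatic_number H \<le> r" unfolding chromatic_number_def by (intro Least_le) blast
  thus False using Hs H by fastforce
qed

definition monoc :: "(nat \<Rightarrow> nat) \<Rightarrow> nat set \<Rightarrow> bool" where
  "monoc c e \<longleftrightarrow> (\<forall>u\<in>e. \<forall>w\<in>e. c u = c w)"

lemma monoc_pair: "monoc c {x,y} \<longleftrightarrow> c x = c y"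
  unfolding monoc_def by auto

lemma edge2': assumes "card e = 2" obtains x y where "e = {x,y}" "x \<noteq> y"
  using assms by (auto simp: card_2_iff)

lemma edge_other: assumes "card e = 2" "v \<in> e" obtains u where "e = {v,u}" "u \<noteq> v"
proof -
  obtain x y where xy: "e = {x,y}" "x \<noteq> y" using assms(1) by (rule edge2')
  show ?thesis
  proof (cases "v = x")
    case True thus ?thesis using xy that by blast
  next
    case False
    hence "v = y" using assms(2) xy by auto
    hence "e = {v,x}" "x \<noteq> v" using xy by auto
    thus ?thesis using that by blast
  qed
qed

lemma sum_incid:
  assumes finV: "finite V" and finS: "finite S" and S2: "\<forall>e\<in>S. card e = 2 \<and> e \<subseteq> V"
  shows "(\<Sum>v\<in>V. card {e\<in>S. v \<in> e}) = 2 * card S"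
proof -
  have "(\<Sum>v\<in>V. card {e\<in>S. v \<in> e}) = (\<Sum>e\<in>S. card {v\<in>V. v \<in> e})"
    by (rule double_count[OF finV finS])
  also have "\<dots> = (\<Sum>e\<in>S. 2)"
  proof (rule sum.cong)
    fix e assume "e \<in> S"
    hence "{v\<in>V. v \<in> e} = e" "card e = 2" using S2 by auto
    thus "card {v\<in>V. v \<in> e} = 2" by simp
  qed simp
  finally show ?thesis by simp
qed

lemma maxcut:
  assumes fin: "finite G" and G2: "\<forall>e\<in>G. card e = 2" and r: "r \<ge> 1"
  shows "\<exists>c. (\<forall>v\<in>vertices G. c v < r) \<and> r * card {e\<in>G. monoc c e} \<le> card G"
proof -
  define V where "V = vertices G"
  have finV: "finite V" unfolding V_def vertices_def
  proof (intro finite_Union fin)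
    fix M assume "M \<in> G" hence "card M = 2" using G2 by blast
    thus "finite M" by (intro card_ge_0_finite) simp
  qed
  have eV: "e \<subseteq> V" if "e \<in> G" for e using that unfolding V_def vertices_def by blast
  define P where "P c = (\<forall>v\<in>V. c v < r)" for c :: "nat \<Rightarrow> nat"
  have "P (\<lambda>_. 0)" unfolding P_def using r by simp
  then obtain c where cP: "P c" and cmin: "\<forall>c'. P c' \<longrightarrow> card {e\<in>G. monoc c e} \<le> card {e\<in>G. monoc c' e}"
    using ex_has_least_nat[of P "\<lambda>_. 0" "\<lambda>c. card {e\<in>G. monoc c e}"] by blast
  have local: "r * card {e\<in>G. v \<in> e \<and> monoc c e} \<le> card {e\<in>G. v \<in> e}" if vV: "v \<in> V" for v
  proof -
    define Gv where "Gv = {e\<in>G. v \<in> e}"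
    have finGv: "finite Gv" unfolding Gv_def using fin by simp
    have split: "card {e\<in>G. monoc c' e} = card {e\<in>G. v \<notin> e \<and> monoc c' e} + card {e\<in>Gv. monoc c' e}" for c'
    proof -
      have "{e\<in>G. monoc c' e} = {e\<in>G. v \<notin> e \<and> monoc c' e} \<union> {e\<in>Gv. monoc c' e}" unfolding Gv_def by blast
      moreover have "{e\<in>G. v \<notin> e \<and> monoc c' e} \<inter> {e\<in>Gv. monoc c' e} = {}" unfolding Gv_def by blast
      ultimately show ?thesis using fin finGv by (simp add: card_Un_disjoint)
    qed
    have key1: "card {e\<in>Gv. monoc c e} \<le> card {e\<in>Gv. monoc (c(v:=j)) e}" if j: "j < r" for j
    proof -
      have "P (c(v:=j))" using cP j unfolding P_def by simp
      hence le: "card {e\<in>G. monoc c e} \<le> card {e\<in>G. monoc (c(v:=j)) e}" using cmin by blast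
      have "{e\<in>G. v \<notin> e \<and> monoc (c(v:=j)) e} = {e\<in>G. v \<notin> e \<and> monoc c e}"
      proof -
        have "monoc (c(v:=j)) e = monoc c e" if "v \<notin> e" for e
          unfolding monoc_def using that by (metis fun_upd_other)
        thus ?thesis by blast
      qed
      thus ?thesis using le split[of c] split[of "c(v:=j)"] by simp
    qed
    have key2: "(\<Sum>j<r. card {e\<in>Gv. monoc (c(v:=j)) e}) = card Gv"
    proof -
      have "(\<Sum>j<r. card {e\<in>Gv. monoc (c(v:=j)) e}) = (\<Sum>e\<in>Gv. card {j\<in>{..<r}. monoc (c(v:=j)) e})"
        by (rule double_count) (simp_all add: finGv)
      also have "\<dots> = (\<Sum>e\<in>Gv. 1)"
      proof (rule sum.cong)
        fix e assume e: "e \<in> Gv"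
        have "card e = 2" "v \<in> e" using e G2 unfolding Gv_def by auto
        then obtain u where u: "e = {v,u}" "u \<noteq> v" by (rule edge_other)
        have "u \<in> V" using e eV u unfolding Gv_def by blast
        hence cu: "c u < r" using cP unfolding P_def by blast
        have "{j\<in>{..<r}. monoc (c(v:=j)) e} = {c u}" using u cu by (auto simp: monoc_pair)
        thus "card {j\<in>{..<r}. monoc (c(v:=j)) e} = 1" by simp
      qed simp
      finally show ?thesis by simp
    qed
    have "r * card {e\<in>Gv. monoc c e} = (\<Sum>j<r. card {e\<in>Gv. monoc c e})" by simp
    also have "\<dots> \<le> (\<Sum>j<r. card {e\<in>Gv. monoc (c(v:=j)) e})" by (rule sum_mono) (simp add: key1)
    also have "\<dots> = card Gv" by (rule key2)
    finally have "r * card {e\<in>Gv. monoc c e} \<le> card Gv" .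
    moreover have "{e\<in>Gv. monoc c e} = {e\<in>G. v \<in> e \<and> monoc c e}" unfolding Gv_def by blast
    ultimately show ?thesis unfolding Gv_def by simp
  qed
  have "r * (2 * card {e\<in>G. monoc c e}) = r * (\<Sum>v\<in>V. card {e\<in>{e\<in>G. monoc c e}. v \<in> e})"
    using sum_incid[OF finV, of "{e\<in>G. monoc c e}"] fin G2 eV by simp
  also have "\<dots> = (\<Sum>v\<in>V. r * card {e\<in>G. v \<in> e \<and> monoc c e})"
  proof -
    have "\<And>v. {e\<in>{e\<in>G. monoc c e}. v \<in> e} = {e\<in>G. v \<in> e \<and> monoc c e}" by blast
    thus ?thesis by (simp add: sum_distrib_left)
  qed
  also have "\<dots> \<le> (\<Sum>v\<in>V. card {e\<in>G. v \<in> e})" by (rule sum_mono) (rule local)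
  also have "\<dots> = 2 * card G" using sum_incid[OF finV fin] G2 eV by simp
  finally have "r * card {e\<in>G. monoc c e} \<le> card G" by simp
  moreover have "\<forall>v\<in>vertices G. c v < r" using cP unfolding P_def V_def .
  ultimately show ?thesis by blast
qed

lemma limit_core:
  fixes E :: "nat \<Rightarrow> real" and L :: real
  assumes up: "\<forall>k\<ge>1. E k \<le> L * real k"
    and lo: "\<forall>a::real. a < L \<longrightarrow> eventually (\<lambda>k. a * real k < E k) sequentially"
  shows "((\<lambda>k. E k / k) \<longlongrightarrow> L) sequentially"
  unfolding order_tendsto_iff
proof (intro conjI allI impI)
  fix a assume "a < L"
  hence ev: "eventually (\<lambda>k. a * real k < E k) sequentially" using lo by blast
  show "eventually (\<lambda>k. a < E k / k) sequentially"
    using ev eventually_ge_at_top[of 1]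
  proof eventually_elim
    case (elim k)
    hence "real k > 0" by simp
    thus ?case using elim(1) by (simp add: field_simps)
  qed
next
  fix a assume aL: "a > L"
  show "eventually (\<lambda>k. E k / k < a) sequentially"
    using eventually_ge_at_top[of 1]
  proof eventually_elim
    case (elim k)
    hence k0: "real k > 0" by simp
    have "E k \<le> L * k" using up elim by blast
    hence "E k / k \<le> L" using k0 by (simp add: field_simps)
    thus ?case using aL by simp
  qed
qed

lemma choose_ge: "real (n choose 2) \<ge> real n - 1"
proof -
  have "(real n - 1) * (real n - 2) \<ge> 0"
  proof (cases "n \<ge> 2")
    case True thus ?thesis by simp
  next
    case False
    hence "n = 0 \<or> n = 1" by auto
    thus ?thesis by auto
  qed
  thus ?thesis using choose2_real[of n] by (simp add: algebra_simps)
qed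

lemma choose_Suc_real: "real (Suc n choose 2) = real (n choose 2) + real n"
  using choose2_real[of n] choose2_real[of "Suc n"] by (simp add: algebra_simps)

lemma lower_core:
  fixes E :: "nat \<Rightarrow> real" and r :: nat
  assumes r: "r \<ge> 2"
    and H: "\<forall>d>0. \<exists>N. \<forall>n\<ge>N. \<forall>k::nat. ((real r - 1)/r + d) * (n choose 2) + 1 \<le> real k \<longrightarrow> real (n choose 2) \<le> E k"
  shows "\<forall>a::real. a < real r / (real r - 1) \<longrightarrow> eventually (\<lambda>k. a * real k < E k) sequentially"
proof (intro allI impI)
  fix a assume a: "a < real r / (real r - 1)"
  define L where "L = real r / (real r - 1)"
  have r1: "real r - 1 > 0" using r by simp
  have Lpos: "L > 0" unfolding L_def using r1 r by simp
  have iL: "1/L = (real r - 1)/r" unfolding L_def by simp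
  have iL2: "1/L \<ge> 1/2" using r unfolding iL by (simp add: field_simps)
  define a' where "a' = max a (L/2)"
  have aL: "a < L" using a L_def by simp
  have a'pos: "a' > 0" "a' < L" "a \<le> a'" unfolding a'_def using aL Lpos by auto
  define b where "b = (a' + L)/2"
  have b: "b > a'" "b < L" "b > 0" unfolding b_def using a'pos by auto
  have bL: "1/b > 1/L" using b Lpos by (simp add: frac_less2)
  define d where "d = (1/b - 1/L)/2"
  have d0: "d > 0" unfolding d_def using bL by simp
  define \<beta> where "\<beta> = (real r - 1)/r + d"
  have \<beta>1: "\<beta> = 1/L + d" unfolding \<beta>_def iL ..
  have \<beta>2: "\<beta> \<ge> 1/2" using iL2 d0 \<beta>1 by simp
  have \<beta>pos: "\<beta> > 0" using \<beta>2 by simp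
  have aux: "\<And>x y::real. x < y \<Longrightarrow> x + (y - x)/2 < y" by (simp add: field_simps)
  have \<beta>b: "\<beta> < 1/b" using aux[OF bL] \<beta>1 d_def by simp
  have ib: "1/\<beta> > b"
  proof -
    have "b * \<beta> < 1" using \<beta>b b by (simp add: field_simps)
    thus ?thesis using \<beta>pos by (simp add: field_simps)
  qed
  define \<gamma> where "\<gamma> = 1/\<beta> - a'"
  have \<gamma>0: "\<gamma> > 0" unfolding \<gamma>_def using ib b by simp
  obtain N where N: "\<forall>n\<ge>N. \<forall>k::nat. \<beta> * (n choose 2) + 1 \<le> real k \<longrightarrow> real (n choose 2) \<le> E k"
    using H d0 unfolding \<beta>_def by blast
  define M where "M = 1 + 4/(\<beta>*\<gamma>)"
  define K where "K = max (\<beta> * (N choose 2) + 1) (max (2*M/\<gamma>) (2/(\<beta>*\<gamma>)))"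
  obtain K0 :: nat where K0: "real K0 > K" using reals_Archimedean2 by blast
  show "eventually (\<lambda>k. a * real k < E k) sequentially"
    unfolding eventually_sequentially
  proof (intro exI[of _ K0] allI impI)
    fix k assume kK: "K0 \<le> k"
    hence kK': "real k > K" using K0 by (meson of_nat_le_iff less_le_trans)
    define S where "S = {n. \<beta> * (n choose 2) + 1 \<le> real k}"
    have Sb: "S \<subseteq> {..2*k}"
    proof
      fix n assume "n \<in> S"
      hence "\<beta> * (n choose 2) + 1 \<le> real k" unfolding S_def by simp
      moreover have "\<beta> * (n choose 2) \<ge> (real n - 1)/2"
      proof -
        have "(real n - 1)/2 \<le> real (n choose 2) / 2" using choose_ge[of n] by simp
        also have "\<dots> = 1/2 * real (n choose 2)" by simp
        also have "\<dots> \<le> \<beta> * (n choose 2)" by (rule mult_right_mono[OF \<beta>2]) simp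
        finally show ?thesis .
      qed
      hence "real n - 1 \<le> 2 * (\<beta> * (n choose 2))" by (simp add: field_simps)
      ultimately have "real n \<le> 2 * real k" by linarith
      thus "n \<in> {..2*k}" by simp
    qed
    have finS: "finite S" using Sb finite_subset by blast
    have NS: "N \<in> S" unfolding S_def using kK' K_def by simp
    define n where "n = Max S"
    have nS: "n \<in> S" unfolding n_def using finS NS by (intro Max_in) auto
    have nN: "n \<ge> N" unfolding n_def using finS NS by simp
    have n1S: "Suc n \<notin> S" using finS nS unfolding n_def by (metis Max_ge Suc_n_not_le_n)
    have Ek: "real (n choose 2) \<le> E k" using N nN nS unfolding S_def by blast
    have h1: "\<beta> * (real (n choose 2) + real n) + 1 > real k"
      using n1S choose_Suc_real[of n] unfolding S_def by simp
    have hn: "\<beta> * (n choose 2) + 1 \<le> real k" using nS unfolding S_def by simp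
    have nsmall: "real n \<le> \<gamma> * k / 2"
    proof (cases "real n \<ge> M")
      case True
      have "real n - 1 \<ge> 4/(\<beta>*\<gamma>)" using True M_def by simp
      hence "real n * (real n - 1) \<ge> real n * (4/(\<beta>*\<gamma>))" by (rule mult_left_mono) simp
      hence "\<beta> * (real n * (4/(\<beta>*\<gamma>))) \<le> \<beta> * (real n * (real n - 1))"
        by (rule mult_left_mono) (use \<beta>pos in simp)
      hence "\<beta> * (real n * (real n - 1)) / 2 \<ge> \<beta> * (real n * (4/(\<beta>*\<gamma>))) / 2"
        by (rule divide_right_mono) simp
      moreover have "\<beta> * (real n * (4/(\<beta>*\<gamma>))) / 2 = 2 * real n / \<gamma>" using \<beta>pos \<gamma>0 by (simp add: field_simps)
      moreover have "\<beta> * real (n choose 2) = \<beta> * (real n * (real n - 1)) / 2" using choose2_real[of n] by simp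
      ultimately have "2 * real n / \<gamma> \<le> real k" using hn by linarith
      thus ?thesis using \<gamma>0 by (simp add: field_simps)
    next
      case False
      hence "real n < M" by simp
      moreover have "M \<le> \<gamma> * k / 2"
      proof -
        have "2*M/\<gamma> < real k" using kK' K_def by simp
        thus ?thesis using \<gamma>0 by (simp add: field_simps)
      qed
      ultimately show ?thesis by simp
    qed
    have bsmall: "1/\<beta> \<le> \<gamma> * k / 2"
    proof -
      have "2/(\<beta>*\<gamma>) < real k" using kK' K_def by simp
      hence "2 < real k * (\<beta>*\<gamma>)" using \<beta>pos \<gamma>0 by (simp add: field_simps)
      thus ?thesis using \<beta>pos \<gamma>0 by (simp add: field_simps)
    qed
    have "real (n choose 2) > (real k - 1)/\<beta> - real n"
    proof -
      have "\<beta> * (real (n choose 2) + real n) > real k - 1" using h1 by simp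
      hence "real (n choose 2) + real n > (real k - 1)/\<beta>" using \<beta>pos by (simp add: field_simps)
      thus ?thesis by simp
    qed
    moreover have "(real k - 1)/\<beta> - real n = \<gamma> * k + a' * k - 1/\<beta> - real n"
      unfolding \<gamma>_def using \<beta>pos by (simp add: field_simps)
    ultimately have "real (n choose 2) > a' * k" using nsmall bsmall by linarith
    moreover have "a * k \<le> a' * k" using a'pos by (simp add: mult_right_mono)
    ultimately show "a * real k < E k" using Ek by linarith
  qed
qed

lemma chrom_empty: "chromatic_number {} = 0"
proof -
  have "proper_colouring {} id 0" unfolding proper_colouring_def vertices_def by simp
  thus ?thesis unfolding chromatic_number_def by (metis (mono_tags, lifting) Least_eq_0)
qed

lemma empty_free: "\<forall>H\<in>Hs. H \<noteq> {} \<Longrightarrow> free_of Hs {}"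
  unfolding free_of_def subgraph_of_def by blast

lemma ex_set_fin: "graph G \<Longrightarrow> finite {card F | F. F \<subseteq> G \<and> free_of Hs F}"
proof -
  assume "graph G"
  hence "finite G" unfolding graph_def by blast
  hence "finite {F. F \<subseteq> G \<and> free_of Hs F}" by simp
  moreover have "{card F | F. F \<subseteq> G \<and> free_of Hs F} = card ` {F. F \<subseteq> G \<and> free_of Hs F}" by blast
  ultimately show ?thesis by simp
qed

lemma ex_ge: "graph G \<Longrightarrow> F \<subseteq> G \<Longrightarrow> free_of Hs F \<Longrightarrow> card F \<le> ex G Hs"
  unfolding ex_def by (rule Max_ge[OF ex_set_fin]) auto

lemma ex_lt:
  assumes "graph G" "free_of Hs {}" "\<forall>F. F \<subseteq> G \<longrightarrow> free_of Hs F \<longrightarrow> card F < k"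
  shows "ex G Hs < k"
proof -
  have ne: "{card F | F. F \<subseteq> G \<and> free_of Hs F} \<noteq> {}" using assms(2) by blast
  have "\<forall>a\<in>{card F | F. F \<subseteq> G \<and> free_of Hs F}. a < k" using assms(3) by blast
  thus ?thesis unfolding ex_def using Max_less_iff[OF ex_set_fin[OF assms(1)] ne] by blast
qed

lemma upper:
  assumes gG: "graph G" and r: "r \<ge> 1" and Hs: "\<forall>H\<in>Hs. r < chromatic_number H"
  shows "real (card G) * (1 - 1/r) \<le> real (ex G Hs)"
proof -
  have fin: "finite G" and G2: "\<forall>e\<in>G. card e = 2" using gG unfolding graph_def by auto
  obtain c where c: "\<forall>v\<in>vertices G. c v < r" "r * card {e\<in>G. monoc c e} \<le> card G"
    using maxcut[OF fin G2 r] by blast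
  define F where "F = {e\<in>G. \<not> monoc c e}"
  have pc: "proper_colouring F c r" unfolding proper_colouring_def
  proof (intro conjI ballI impI)
    fix v assume "v \<in> vertices F"
    hence "v \<in> vertices G" unfolding vertices_def F_def by blast
    thus "c v < r" using c by blast
  next
    fix e u w assume e: "e \<in> F" and u: "u \<in> e" and w: "w \<in> e" and uw: "u \<noteq> w"
    have "card e = 2" using e G2 unfolding F_def by blast
    then obtain x y where xy: "e = {x,y}" "x \<noteq> y" by (rule edge2)
    hence "e = {u,w}" using u w uw by auto
    moreover have "\<not> monoc c e" using e unfolding F_def by blast
    ultimately show "c u \<noteq> c w" by (simp add: monoc_pair)
  qed
  have fr: "free_of Hs F" by (rule colourable_free[OF pc Hs])
  have FG: "F \<subseteq> G" unfolding F_def by blast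
  have cF: "card F \<le> ex G Hs" by (rule ex_ge[OF gG FG fr])
  have split: "card G = card F + card {e\<in>G. monoc c e}"
  proof -
    have eq: "G = F \<union> {e\<in>G. monoc c e}" unfolding F_def by blast
    have dj: "F \<inter> {e\<in>G. monoc c e} = {}" unfolding F_def by blast
    have "finite F" "finite {e\<in>G. monoc c e}" using fin FG by (auto intro: finite_subset)
    hence "card (F \<union> {e\<in>G. monoc c e}) = card F + card {e\<in>G. monoc c e}" using dj by (rule card_Un_disjoint)
    thus ?thesis using eq by simp
  qed
  have "real r * real (card {e\<in>G. monoc c e}) \<le> real (card G)" using c(2) by (metis of_nat_le_iff of_nat_mult)
  hence "real (card {e\<in>G. monoc c e}) \<le> real (card G) / r" using r by (simp add: field_simps)
  moreover have "real (card G) * (1 - 1/r) = real (card G) - real (card G)/r" by (simp add: algebra_simps)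
  moreover have "real (card G) = real (card F) + real (card {e\<in>G. monoc c e})" using split by simp
  ultimately have "real (card G) * (1 - 1/r) \<le> real (card F)" by linarith
  thus ?thesis using cF by linarith
qed

lemma Kn_graph: "graph {e. e \<subseteq> {..<n} \<and> card e = 2}"
  unfolding graph_def by (auto intro: finite_subset[of _ "Pow {..<n}"])

lemma Kn_card: "card {e. e \<subseteq> {..<(n::nat)} \<and> card e = 2} = n choose 2"
  using n_subsets[of "{..<n}" 2] by simp


theorem theorem1p1:
  fixes Hs :: "nat set set set" and \<rho> :: nat
  assumes "\<forall>H\<in>Hs. graph H"
    and "\<exists>H\<in>Hs. chromatic_number H = \<rho>"
    and "\<forall>H\<in>Hs. \<rho> \<le> chromatic_number H"
    and "\<rho> \<ge> 3"
  shows "((\<lambda>k. E_fun Hs k / ereal (real k))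
           \<longlongrightarrow> ereal (1 + 1 / (real \<rho> - 2))) sequentially"
proof -
  obtain H0 where H0: "H0 \<in> Hs" "chromatic_number H0 = \<rho>" using assms(2) by blast
  define r where "r = \<rho> - 1"
  have \<rho>r: "\<rho> = Suc r" and r2: "r \<ge> 2" using assms(4) unfolding r_def by auto
  have r1: "r \<ge> 1" using r2 by simp
  have Hsr: "\<forall>H\<in>Hs. r < chromatic_number H" using assms(3) \<rho>r by fastforce
  have Hne: "\<forall>H\<in>Hs. H \<noteq> {}" using Hsr chrom_empty by fastforce
  have free0: "free_of Hs {}" by (rule empty_free[OF Hne])
  have gH0: "graph H0" using assms(1) H0 by blast
  obtain c0 where c0: "proper_colouring H0 c0 (Suc r)" using colour_exists[OF gH0] H0(2) \<rho>r by metis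
  define t where "t = card (vertices H0) + 1"
  have t1: "t \<ge> 1" unfolding t_def by simp
  define L where "L = real r / (real r - 1)"
  have rr: "real r - 1 > 0" using r2 by simp
  define E where "E k = real_of_ereal (E_fun Hs k)" for k
  have graph0: "graph {}" unfolding graph_def by simp
  have Eup: "E_fun Hs k \<le> ereal (L * real k)" for k
    unfolding E_fun_def
  proof (rule Sup_least)
    fix x assume "x \<in> {ereal (real (card G)) | G. graph G \<and> ex G Hs < k}"
    then obtain G where G: "x = ereal (real (card G))" "graph G" "ex G Hs < k" by blast
    have "real (card G) * (1 - 1/r) \<le> real (ex G Hs)" by (rule upper[OF G(2) r1 Hsr])
    also have "\<dots> \<le> real k" using G(3) by simp
    finally have a: "real (card G) * (1 - 1/r) \<le> real k" .
    have b: "1 - 1/real r = (real r - 1)/real r" using r1 by (simp add: field_simps)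
    have "real (card G) * (real r - 1) \<le> real k * real r" using a r1 unfolding b by (simp add: field_simps)
    hence "real (card G) \<le> L * real k" unfolding L_def using rr by (simp add: field_simps)
    thus "x \<le> ereal (L * real k)" using G(1) by simp
  qed
  have Elo: "ereal 0 \<le> E_fun Hs k" if k: "k \<ge> 1" for k
  proof -
    have "ex {} Hs < k" by (rule ex_lt[OF graph0 free0]) (use k in auto)
    hence "ereal (real (card ({}::nat set set))) \<in> {ereal (real (card G)) | G. graph G \<and> ex G Hs < k}"
      using graph0 by blast
    hence "ereal (real (card ({}::nat set set))) \<le> E_fun Hs k" unfolding E_fun_def by (rule Sup_upper)
    thus ?thesis by simp
  qed
  have Eeq: "E_fun Hs k = ereal (E k)" if k: "k \<ge> 1" for k
  proof (cases "E_fun Hs k")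
    case (real y) thus ?thesis unfolding E_def by simp
  next
    case PInf thus ?thesis using Eup[of k] by simp
  next
    case MInf thus ?thesis using Elo[OF k] by simp
  qed
  have up: "\<forall>k\<ge>1. E k \<le> L * real k" using Eup Eeq by (metis ereal_less_eq(3))
  have H: "\<forall>d>0. \<exists>N. \<forall>n\<ge>N. \<forall>k::nat. ((real r - 1)/r + d) * (n choose 2) + 1 \<le> real k \<longrightarrow> real (n choose 2) \<le> E k"
  proof (intro allI impI)
    fix d :: real assume d: "d > 0"
    obtain N where N: "\<forall>n\<ge>N. \<forall>F. (\<forall>e\<in>F. card e = 2 \<and> e \<subseteq> {..<n}) \<longrightarrow>
     real (card F) \<ge> ((real r - 1)/r + d) * (n choose 2) \<longrightarrow> (\<exists>B. Kpart F (Suc r) t B)"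
      using ES[OF r1 d t1] by blast
    show "\<exists>N. \<forall>n\<ge>N. \<forall>k::nat. ((real r - 1)/r + d) * (n choose 2) + 1 \<le> real k \<longrightarrow> real (n choose 2) \<le> E k"
    proof (intro exI[of _ N] allI impI)
      fix n k assume n: "N \<le> n" and k: "((real r - 1)/r + d) * (n choose 2) + 1 \<le> real k"
      define Kn where "Kn = {e. e \<subseteq> {..<n} \<and> card e = 2}"
      have gK: "graph Kn" unfolding Kn_def by (rule Kn_graph)
      have small: "card F < k" if F: "F \<subseteq> Kn" "free_of Hs F" for F
      proof (rule ccontr)
        assume "\<not> card F < k"
        hence "real (card F) \<ge> ((real r - 1)/r + d) * (n choose 2)" using k by simp
        moreover have "\<forall>e\<in>F. card e = 2 \<and> e \<subseteq> {..<n}" using F(1) unfolding Kn_def by blast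
        ultimately obtain B where B: "Kpart F (Suc r) t B" using N n by blast
        have "subgraph_of H0 F" by (rule embed[OF gH0 c0 B]) (simp add: t_def)
        thus False using F(2) H0(1) unfolding free_of_def by blast
      qed
      have "ex Kn Hs < k" by (rule ex_lt[OF gK free0]) (use small in blast)
      hence "ereal (real (card Kn)) \<in> {ereal (real (card G)) | G. graph G \<and> ex G Hs < k}"
        using gK by blast
      hence "ereal (real (card Kn)) \<le> E_fun Hs k" unfolding E_fun_def by (rule Sup_upper)
      moreover have k1: "k \<ge> 1"
      proof -
        have "0 \<le> ((real r - 1)/r + d) * (n choose 2)" using rr d by simp
        hence "real k \<ge> 1" using k by linarith
        thus ?thesis by simp
      qed
      ultimately have "ereal (real (card Kn)) \<le> ereal (E k)" using Eeq by simp
      thus "real (n choose 2) \<le> E k" unfolding Kn_def using Kn_card by simp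
    qed
  qed
  have lo: "\<forall>a::real. a < L \<longrightarrow> eventually (\<lambda>k. a * real k < E k) sequentially"
    using lower_core[OF r2 H] unfolding L_def .
  have lim: "((\<lambda>k. E k / real k) \<longlongrightarrow> L) sequentially" by (rule limit_core[OF up lo])
  have Lval: "1 + 1 / (real \<rho> - 2) = L" unfolding L_def \<rho>r using rr by (simp add: field_simps)
  have ev: "eventually (\<lambda>k. ereal (E k / real k) = E_fun Hs k / ereal (real k)) sequentially"
    using eventually_ge_at_top[of 1]
  proof eventually_elim
    case (elim k)
    thus ?case using Eeq[OF elim] by (simp add: ereal_divide)
  qed
  have "((\<lambda>k. ereal (E k / real k)) \<longlongrightarrow> ereal L) sequentially" using lim by simp
  hence "((\<lambda>k. E_fun Hs k / ereal (real k)) \<longlongrightarrow> ereal L) sequentially"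
    using tendsto_cong[OF ev] by blast
  thus ?thesis using Lval by simp
qed

end
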